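(* Let $E\in M_n(\mathbb{FT})$ be an idempotent all of whose diagonal entries equal $0$. Choose a set $\{c_1,\dots,c_k\}$ of representatives of the critical classes of $E$, and let $M$ be the $k\times n$ matrix over $\mathbb{T}$, with rows indexed by $c_1,\dots,c_k$, defined by $M_{c_i,j}=0$ if $j=c_i$ and $M_{c_i,j}=-\infty$ otherwise. Then (i) $F=M\otimes E\otimes M^T$ (which is the $k\times k$ submatrix of $E$ with rows and columns indexed by $c_1,\dots,c_k$) is an idempotent of rank $k$ in $M_k(\mathbb{FT})$; (ii) the map $\phi:A\mapsto M\otimes A\otimes M^T$ restricts to an isomorphism of groups from the $\mathcal H$-class of $E$ in $M_n(\mathbb{FT})$ onto the $\mathcal H$-class of $F$ in $M_k(\mathbb{FT})$.
   Context: $\mathbb{FT}$ is $\mathbb{R}$ with $a\oplus b=\max(a,b)$, $a\otimes b=a+b$; $\mathbb{T}=\mathbb{R}\cup\{-\infty\}$ with the obvious extensions. Matrices are multiplied by $(A\otimes B)_{i,j}=\bigoplus_k A_{i,k}\otimes B_{k,j}$; $M_n(\mathbb{FT})$ is the semigroup of real $n\times n$ matrices. For $A\in M_n(\mathbb{FT})$, $\Gamma_A$ is the complete weighted digraph on $\{1,\dots,n\}$ with an edge $j\to i$ of weight $A_{i,j}$; the maximum cycle mean of $A$ is the maximum of the (arithmetic) average edge weights over all closed paths; the critical graph consists of all nodes and edges lying on a closed path whose average weight equals the maximum cycle mean; its nodes are critical nodes, and the critical classes are the strongly connected components of the critical graph (equivalence classes of critical nodes). $C(A)$ is the set of finite componentwise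 maxima of columns of $A$ shifted by real constants; the rank of an idempotent $E$ is the minimal cardinality of a generating set of $C(E)$ under componentwise max and adding real constants. Green's relations on a semigroup $S$: $a\,\mathcal{R}\,b$ iff $aS^1=bS^1$, $a\,\mathcal{L}\,b$ iff $S^1a=S^1b$, $\mathcal{H}=\mathcal{L}\cap\mathcal{R}$. *)

theory Defs
  imports Complex_Main "HOL-Library.Extended_Real"
begin

text \<open>Real n x n matrices (the semigroup M_n(FT)) are represented as functions
 nat => nat => real, with indices 0..n-1; entries outside are fixed to 0 so that
 equality of matrices is equality of functions.\<close>

type_synonym rmat = "nat \<Rightarrow> nat \<Rightarrow> real"
type_synonym emat = "nat \<Rightarrow> nat \<Rightarrow> ereal"

definition mats :: "nat \<Rightarrow> rmat set" where
  "mats n = {A. \<forall>i j. (n \<le> i \<or> n \<le> j) \<longrightarrow> A i j = 0}"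

definition tmul :: "nat \<Rightarrow> rmat \<Rightarrow> rmat \<Rightarrow> rmat" where
  "tmul n A B = (\<lambda>i j. if i < n \<and> j < n then Max {A i l + B l j | l. l < n} else 0)"

definition idempotent :: "nat \<Rightarrow> rmat \<Rightarrow> bool" where
  "idempotent n E \<longleftrightarrow> E \<in> mats n \<and> tmul n E E = E"

text \<open>Max-plus product over T = R \<union> {-\<infinity>} (ereal, only finite and -\<infinity> values occur):
 (A \<otimes> B)_{i,j} = max_{t < l} (A_{i,t} + B_{t,j}), l the inner dimension.\<close>
definition emul :: "nat \<Rightarrow> emat \<Rightarrow> emat \<Rightarrow> emat" where
  "emul l A B = (\<lambda>i j. Max {A i t + B t j | t. t < l})"

definition etrans :: "emat \<Rightarrow> emat" where
  "etrans A = (\<lambda>i j. A j i)"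

definition embed :: "rmat \<Rightarrow> emat" where
  "embed A = (\<lambda>i j. ereal (A i j))"

definition selmat :: "nat list \<Rightarrow> emat" where
  "selmat cs = (\<lambda>i j. if i < length cs \<and> j = cs ! i then 0 else -\<infinity>)"

definition phi :: "nat \<Rightarrow> nat list \<Rightarrow> rmat \<Rightarrow> rmat" where
  "phi n cs A = (\<lambda>i j. if i < length cs \<and> j < length cs
      then real_of_ereal (emul n (emul n (selmat cs) (embed A)) (etrans (selmat cs)) i j)
      else 0)"

text \<open>A closed path in Gamma_A is a nonempty list of nodes [v_0,...,v_{m-1}] (each < n),
 traversing edges v_t -> v_{(t+1) mod m}; the edge j -> i has weight A i j.\<close>
definition closed_path :: "nat \<Rightarrow> nat list \<Rightarrow> bool" where
  "closed_path n p \<longleftrightarrow> p \<noteq> [] \<and> set p \<subseteq> {..<n}"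

definition cp_weight :: "rmat \<Rightarrow> nat list \<Rightarrow> real" where
  "cp_weight A p = (\<Sum>t<length p. A (p ! ((t + 1) mod length p)) (p ! t))"

definition cp_mean :: "rmat \<Rightarrow> nat list \<Rightarrow> real" where
  "cp_mean A p = cp_weight A p / real (length p)"

definition max_cycle_mean :: "nat \<Rightarrow> rmat \<Rightarrow> real" where
  "max_cycle_mean n A = Sup {cp_mean A p | p. closed_path n p}"

definition critical_path :: "nat \<Rightarrow> rmat \<Rightarrow> nat list \<Rightarrow> bool" where
  "critical_path n A p \<longleftrightarrow> closed_path n p \<and> cp_mean A p = max_cycle_mean n A"

definition critical_node :: "nat \<Rightarrow> rmat \<Rightarrow> nat \<Rightarrow> bool" where
  "critical_node n A i \<longleftrightarrow> (\<exists>p. critical_path n A p \<and> i \<in> set p)"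

text \<open>Critical edges j -> i, as pairs (j, i).\<close>
definition critical_edges :: "nat \<Rightarrow> rmat \<Rightarrow> (nat \<times> nat) set" where
  "critical_edges n A = {(j, i). \<exists>p t. critical_path n A p \<and> t < length p \<and>
       p ! t = j \<and> p ! ((t + 1) mod length p) = i}"

definition same_crit_class :: "nat \<Rightarrow> rmat \<Rightarrow> nat \<Rightarrow> nat \<Rightarrow> bool" where
  "same_crit_class n A i j \<longleftrightarrow> critical_node n A i \<and> critical_node n A j \<and>
     (i, j) \<in> (critical_edges n A)\<^sup>* \<and> (j, i) \<in> (critical_edges n A)\<^sup>*"

definition crit_reps :: "nat \<Rightarrow> rmat \<Rightarrow> nat list \<Rightarrow> bool" where
  "crit_reps n A cs \<longleftrightarrow> (\<forall>i < length cs. critical_node n A (cs ! i)) \<and>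
     (\<forall>i < length cs. \<forall>j < length cs. same_crit_class n A (cs ! i) (cs ! j) \<longrightarrow> i = j) \<and>
     (\<forall>c. critical_node n A c \<longrightarrow> (\<exists>i < length cs. same_crit_class n A c (cs ! i)))"

text \<open>Vectors in R^n are functions nat => real vanishing at indices >= n.
 tspan n S = all finite (nonempty) componentwise maxima of elements of S shifted by reals,
 i.e. the closure of S under \<oplus> and adding real constants.\<close>
definition tspan :: "nat \<Rightarrow> (nat \<Rightarrow> real) set \<Rightarrow> (nat \<Rightarrow> real) set" where
  "tspan n S = {v. \<exists>(m::nat) vs (c::nat \<Rightarrow> real). 0 < m \<and> (\<forall>t<m. vs t \<in> S) \<and>
      v = (\<lambda>i. if i < n then Max {vs t i + c t | t. t < m} else 0)}"

definition col :: "rmat \<Rightarrow> nat \<Rightarrow> (nat \<Rightarrow> real)" where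
  "col A j = (\<lambda>i. A i j)"

definition colspace :: "nat \<Rightarrow> rmat \<Rightarrow> (nat \<Rightarrow> real) set" where
  "colspace n A = tspan n {col A j | j. j < n}"

definition trank :: "nat \<Rightarrow> rmat \<Rightarrow> nat" where
  "trank n E = (LEAST r. \<exists>S. finite S \<and> S \<subseteq> colspace n E \<and> tspan n S = colspace n E \<and> card S = r)"

definition right_ideal1 :: "nat \<Rightarrow> rmat \<Rightarrow> rmat set" where
  "right_ideal1 n a = insert a {tmul n a s | s. s \<in> mats n}"

definition left_ideal1 :: "nat \<Rightarrow> rmat \<Rightarrow> rmat set" where
  "left_ideal1 n a = insert a {tmul n s a | s. s \<in> mats n}"

definition greenR :: "nat \<Rightarrow> rmat \<Rightarrow> rmat \<Rightarrow> bool" where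
  "greenR n a b \<longleftrightarrow> right_ideal1 n a = right_ideal1 n b"

definition greenL :: "nat \<Rightarrow> rmat \<Rightarrow> rmat \<Rightarrow> bool" where
  "greenL n a b \<longleftrightarrow> left_ideal1 n a = left_ideal1 n b"

definition Hclass :: "nat \<Rightarrow> rmat \<Rightarrow> rmat set" where
  "Hclass n e = {a \<in> mats n. greenR n a e \<and> greenL n a e}"

end

theory Submission
  imports Defs
begin

definition rm :: "nat \<Rightarrow> rmat \<Rightarrow> rmat \<Rightarrow> rmat" where
  "rm l A B = (\<lambda>i j. Max {A i t + B t j | t. t < l})"

lemma setimg: "{f t | t. t < (l::nat)} = f ` {..<l}" by auto

lemma rm_ge: "t < l \<Longrightarrow> A i t + B t j \<le> rm l A B i j"
  unfolding rm_def by (subst setimg, rule Max_ge) auto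

lemma rm_ex: "0 < l \<Longrightarrow> \<exists>t<l. rm l A B i j = A i t + B t j"
proof -
  assume l: "0 < l"
  have "rm l A B i j \<in> (\<lambda>t. A i t + B t j) ` {..<l}"
    unfolding rm_def by (subst setimg, rule Max_in) (use l in auto)
  then show ?thesis by auto
qed

lemma rm_le: "0 < l \<Longrightarrow> (\<And>t. t < l \<Longrightarrow> A i t + B t j \<le> x) \<Longrightarrow> rm l A B i j \<le> x"
  using rm_ex by metis

lemma tmul_rm: "tmul n A B i j = (if i < n \<and> j < n then rm n A B i j else 0)"
  by (simp add: tmul_def rm_def)

lemma tmul_mats: "tmul n A B \<in> mats n"
  by (auto simp: mats_def tmul_def)

lemma tmul_ge: "i < n \<Longrightarrow> t < n \<Longrightarrow> j < n \<Longrightarrow> A i t + B t j \<le> tmul n A B i j"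
  by (simp add: tmul_rm rm_ge)

lemma tmul_ex: "i < n \<Longrightarrow> j < n \<Longrightarrow> \<exists>t<n. tmul n A B i j = A i t + B t j"
  using rm_ex[of n A B i j] by (simp add: tmul_rm)

lemma tmul_eqI: "i < n \<Longrightarrow> j < n \<Longrightarrow> (\<And>t. t < n \<Longrightarrow> A i t + B t j \<le> x)
   \<Longrightarrow> t0 < n \<Longrightarrow> A i t0 + B t0 j = x \<Longrightarrow> tmul n A B i j = x"
  by (metis antisym rm_le tmul_ge tmul_rm gr_implies_not0 neq0_conv)

lemma tmul_assoc: "tmul n (tmul n A B) C = tmul n A (tmul n B C)"
proof (intro ext)
  fix i j
  show "tmul n (tmul n A B) C i j = tmul n A (tmul n B C) i j"
  proof (cases "i < n \<and> j < n")
    case False then show ?thesis by (auto simp: tmul_rm)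
  next
    case True
    have L: "tmul n (tmul n A B) C i j \<le> tmul n A (tmul n B C) i j"
    proof -
      obtain t where t: "t < n" "tmul n (tmul n A B) C i j = tmul n A B i t + C t j"
        using tmul_ex True by blast
      obtain s where s: "s < n" "tmul n A B i t = A i s + B s t" using tmul_ex True t by blast
      have "B s t + C t j \<le> tmul n B C s j" using tmul_ge s t True by blast
      moreover have "A i s + tmul n B C s j \<le> tmul n A (tmul n B C) i j"
        using tmul_ge s t True by blast
      ultimately show ?thesis using t s by linarith
    qed
    have R: "tmul n A (tmul n B C) i j \<le> tmul n (tmul n A B) C i j"
    proof -
      obtain s where s: "s < n" "tmul n A (tmul n B C) i j = A i s + tmul n B C s j"
        using tmul_ex True by blast
      obtain t where t: "t < n" "tmul n B C s j = B s t + C t j" using tmul_ex True s by blast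
      have "A i s + B s t \<le> tmul n A B i t" using tmul_ge s t True by blast
      moreover have "tmul n A B i t + C t j \<le> tmul n (tmul n A B) C i j"
        using tmul_ge s t True by blast
      ultimately show ?thesis using t s by linarith
    qed
    show ?thesis using L R by simp
  qed
qed

lemma Hclass_char:
  assumes "idempotent m e"
  shows "A \<in> Hclass m e \<longleftrightarrow> A \<in> mats m \<and> (\<exists>x\<in>mats m. A = tmul m e x) \<and> (\<exists>y\<in>mats m. e = tmul m A y)
     \<and> (\<exists>x\<in>mats m. A = tmul m x e) \<and> (\<exists>y\<in>mats m. e = tmul m y A)"
proof -
  have em: "e \<in> mats m" and ee: "tmul m e e = e" using assms by (auto simp: idempotent_def)
  show ?thesis
  proof
    assume H: "A \<in> Hclass m e"
    then have Am: "A \<in> mats m" and R: "right_ideal1 m A = right_ideal1 m e"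
      and L: "left_ideal1 m A = left_ideal1 m e"
      by (auto simp: Hclass_def greenR_def greenL_def)
    have "A \<in> right_ideal1 m A" by (simp add: right_ideal1_def)
    then have "A = e \<or> (\<exists>s. A = tmul m e s \<and> s \<in> mats m)" unfolding R by (simp add: right_ideal1_def)
    then have 1: "\<exists>x\<in>mats m. A = tmul m e x" using em ee by (metis)
    have "e \<in> right_ideal1 m e" by (simp add: right_ideal1_def)
    then have "e = A \<or> (\<exists>s. e = tmul m A s \<and> s \<in> mats m)" unfolding R[symmetric] by (simp add: right_ideal1_def)
    then have 2: "\<exists>y\<in>mats m. e = tmul m A y" using em ee by (metis)
    have "A \<in> left_ideal1 m A" by (simp add: left_ideal1_def)
    then have "A = e \<or> (\<exists>s. A = tmul m s e \<and> s \<in> mats m)" unfolding L by (simp add: left_ideal1_def)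
    then have 3: "\<exists>x\<in>mats m. A = tmul m x e" using em ee by (metis)
    have "e \<in> left_ideal1 m e" by (simp add: left_ideal1_def)
    then have "e = A \<or> (\<exists>s. e = tmul m s A \<and> s \<in> mats m)" unfolding L[symmetric] by (simp add: left_ideal1_def)
    then have 4: "\<exists>y\<in>mats m. e = tmul m y A" using em ee by (metis)
    show "A \<in> mats m \<and> (\<exists>x\<in>mats m. A = tmul m e x) \<and> (\<exists>y\<in>mats m. e = tmul m A y)
     \<and> (\<exists>x\<in>mats m. A = tmul m x e) \<and> (\<exists>y\<in>mats m. e = tmul m y A)"
      using Am 1 2 3 4 by blast
  next
    assume H: "A \<in> mats m \<and> (\<exists>x\<in>mats m. A = tmul m e x) \<and> (\<exists>y\<in>mats m. e = tmul m A y)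
     \<and> (\<exists>x\<in>mats m. A = tmul m x e) \<and> (\<exists>y\<in>mats m. e = tmul m y A)"
    then obtain x y x' y' where Am: "A \<in> mats m" and x: "x \<in> mats m" "A = tmul m e x"
      and y: "y \<in> mats m" "e = tmul m A y" and x': "x' \<in> mats m" "A = tmul m x' e"
      and y': "y' \<in> mats m" "e = tmul m y' A" by blast
    have ar: "\<And>s. s \<in> mats m \<Longrightarrow> tmul m A s = tmul m e (tmul m x s)" using x tmul_assoc by metis
    have er: "\<And>s. s \<in> mats m \<Longrightarrow> tmul m e s = tmul m A (tmul m y s)" using y tmul_assoc by metis
    have al: "\<And>s. s \<in> mats m \<Longrightarrow> tmul m s A = tmul m (tmul m s x') e" using x' tmul_assoc by metis
    have el: "\<And>s. s \<in> mats m \<Longrightarrow> tmul m s e = tmul m (tmul m s y') A" using y' tmul_assoc by metis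
    have "right_ideal1 m A = right_ideal1 m e"
    proof
      show "right_ideal1 m A \<subseteq> right_ideal1 m e"
        unfolding right_ideal1_def using x ar tmul_mats by blast
      show "right_ideal1 m e \<subseteq> right_ideal1 m A"
        unfolding right_ideal1_def using y er tmul_mats by blast
    qed
    moreover have "left_ideal1 m A = left_ideal1 m e"
    proof
      show "left_ideal1 m A \<subseteq> left_ideal1 m e"
        unfolding left_ideal1_def using x' al tmul_mats by blast
      show "left_ideal1 m e \<subseteq> left_ideal1 m A"
        unfolding left_ideal1_def using y' el tmul_mats by blast
    qed
    ultimately show "A \<in> Hclass m e" using Am by (simp add: Hclass_def greenR_def greenL_def)
  qed
qed


locale ctx63 =
  fixes n :: nat and E :: rmat and cs :: "nat list"
  assumes npos: "0 < n" and idem: "idempotent n E" and diag: "\<forall>i<n. E i i = 0"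
    and reps: "crit_reps n E cs"
begin

lemma Emats: "E \<in> mats n" and EE: "tmul n E E = E" using idem by (auto simp: idempotent_def)

lemma tri: "x < n \<Longrightarrow> y < n \<Longrightarrow> z < n \<Longrightarrow> E x y + E y z \<le> E x z"
  using tmul_ge[of x n y z E E] EE by simp

lemma sym_le: "x < n \<Longrightarrow> y < n \<Longrightarrow> E x y + E y x \<le> 0"
  using tri[of x y x] diag by simp

lemma path_sum:
  assumes q: "\<forall>s\<le>b. q s < n" and ab: "a \<le> b"
  shows "(\<Sum>s\<in>{a..<b}. E (q (Suc s)) (q s)) \<le> E (q b) (q a)"
  using q ab
proof (induction b)
  case 0 then show ?case using diag by simp
next
  case (Suc b)
  show ?case
  proof (cases "a = Suc b")
    case True then show ?thesis using diag Suc.prems by simp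
  next
    case False
    then have ab: "a \<le> b" using Suc.prems by simp
    have IH: "(\<Sum>s\<in>{a..<b}. E (q (Suc s)) (q s)) \<le> E (q b) (q a)"
      using Suc.IH Suc.prems ab by simp
    have "(\<Sum>s\<in>{a..<Suc b}. E (q (Suc s)) (q s)) = (\<Sum>s\<in>{a..<b}. E (q (Suc s)) (q s)) + E (q (Suc b)) (q b)"
      using ab by (simp add: sum.atLeastLessThan_Suc)
    also have "\<dots> \<le> E (q b) (q a) + E (q (Suc b)) (q b)" using IH by simp
    also have "\<dots> \<le> E (q (Suc b)) (q a)"
      using tri[of "q (Suc b)" "q b" "q a"] Suc.prems ab by simp
    finally show ?thesis .
  qed
qed

definition qq :: "nat list \<Rightarrow> nat \<Rightarrow> nat" where "qq p s = p ! (s mod length p)"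

lemma qq_lt: "closed_path n p \<Longrightarrow> qq p s < n"
  unfolding closed_path_def qq_def
  by (metis length_greater_0_conv lessThan_iff mod_less_divisor nth_mem subsetD)

lemma weight_qq: "closed_path n p \<Longrightarrow>
   cp_weight E p = (\<Sum>s\<in>{0..<length p}. E (qq p (Suc s)) (qq p s))"
  unfolding cp_weight_def qq_def lessThan_atLeast0
  by (rule sum.cong) auto

lemma weight_le0: "closed_path n p \<Longrightarrow> cp_weight E p \<le> 0"
proof -
  assume cp: "closed_path n p"
  have "cp_weight E p \<le> E (qq p (length p)) (qq p 0)"
    unfolding weight_qq[OF cp] by (rule path_sum) (use qq_lt[OF cp] in auto)
  also have "\<dots> = 0" using diag qq_lt[OF cp, of 0] by (simp add: qq_def)
  finally show ?thesis .
qed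

lemma weight_edge:
  assumes cp: "closed_path n p" and t: "t < length p"
  shows "cp_weight E p \<le> E (qq p (Suc t)) (qq p t) + E (qq p t) (qq p (Suc t))"
proof -
  let ?f = "\<lambda>s. E (qq p (Suc s)) (qq p s)"
  let ?m = "length p"
  have "cp_weight E p = sum ?f {0..<t} + sum ?f {t..<?m}"
    unfolding weight_qq[OF cp] using t by (simp add: sum.atLeastLessThan_concat)
  also have "sum ?f {t..<?m} = ?f t + sum ?f {Suc t..<?m}"
    using t by (simp add: sum.atLeast_Suc_lessThan)
  finally have w: "cp_weight E p = sum ?f {0..<t} + ?f t + sum ?f {Suc t..<?m}" by simp
  have a: "sum ?f {0..<t} \<le> E (qq p t) (qq p 0)"
    by (rule path_sum) (use qq_lt[OF cp] in auto)
  have b: "sum ?f {Suc t..<?m} \<le> E (qq p ?m) (qq p (Suc t))"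
    by (rule path_sum) (use qq_lt[OF cp] t in auto)
  have qm: "qq p ?m = qq p 0" by (simp add: qq_def)
  have c: "E (qq p t) (qq p 0) + E (qq p 0) (qq p (Suc t)) \<le> E (qq p t) (qq p (Suc t))"
    using tri qq_lt[OF cp] by blast
  have b': "sum ?f {Suc t..<?m} \<le> E (qq p 0) (qq p (Suc t))" using b qm by simp
  show ?thesis using w a b' c by linarith
qed

lemma mcm: "max_cycle_mean n E = 0"
proof -
  have z: "0 \<in> {cp_mean E p | p. closed_path n p}"
  proof -
    have "closed_path n [0]" using npos by (simp add: closed_path_def)
    moreover have "cp_mean E [0] = 0" using diag npos by (simp add: cp_mean_def cp_weight_def)
    ultimately show ?thesis by force
  qed
  have le: "\<forall>x\<in>{cp_mean E p | p. closed_path n p}. x \<le> 0"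
    using weight_le0 by (auto simp: cp_mean_def divide_nonpos_nonneg)
  show ?thesis unfolding max_cycle_mean_def by (rule cSup_eq_maximum[OF z]) (use le in auto)
qed

lemma crit_path_iff: "critical_path n E p \<longleftrightarrow> closed_path n p \<and> cp_weight E p = 0"
  unfolding critical_path_def mcm cp_mean_def closed_path_def by auto

lemma crit_node_all: "i < n \<Longrightarrow> critical_node n E i"
proof -
  assume i: "i < n"
  have "critical_path n E [i]" using i diag
    by (simp add: crit_path_iff closed_path_def cp_weight_def)
  then show ?thesis unfolding critical_node_def by force
qed

lemma crit_node_lt: "critical_node n E i \<Longrightarrow> i < n"
  unfolding critical_node_def critical_path_def closed_path_def by auto

lemma crit_edge: "(j, i) \<in> critical_edges n E \<Longrightarrow> i < n \<and> j < n \<and> 0 \<le> E i j + E j i"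
proof -
  assume "(j, i) \<in> critical_edges n E"
  then obtain p t where cp: "critical_path n E p" and t: "t < length p"
    and pj: "p ! t = j" and pi: "p ! ((t + 1) mod length p) = i"
    unfolding critical_edges_def by auto
  have c: "closed_path n p" and w: "cp_weight E p = 0" using cp crit_path_iff by auto
  have qt: "qq p t = j" using pj t by (simp add: qq_def)
  have qs: "qq p (Suc t) = i" using pi by (simp add: qq_def)
  show ?thesis using weight_edge[OF c t] w qt qs qq_lt[OF c] by (metis add.commute)
qed

lemma same_class_iff: "same_crit_class n E x y \<longleftrightarrow> x < n \<and> y < n \<and> E x y + E y x = 0"
proof
  assume S: "same_crit_class n E x y"
  then have x: "x < n" and y: "y < n" using crit_node_lt by (auto simp: same_crit_class_def)
  have R: "(x, y) \<in> (critical_edges n E)\<^sup>*" using S by (simp add: same_crit_class_def)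
  have "0 \<le> E x y + E y x"
    using R
  proof (induction rule: rtrancl_induct)
    case base then show ?case using diag x by simp
  next
    case (step y z)
    have e: "y < n" "z < n" "0 \<le> E z y + E y z" using crit_edge[OF step.hyps(2)] by auto
    have "E x y + E y z \<le> E x z" using tri x e by blast
    moreover have "E z y + E y x \<le> E z x" using tri x e by blast
    ultimately show ?case using step.IH e by linarith
  qed
  then show "x < n \<and> y < n \<and> E x y + E y x = 0" using sym_le[OF x y] x y by simp
next
  assume H: "x < n \<and> y < n \<and> E x y + E y x = 0"
  show "same_crit_class n E x y"
  proof (cases "x = y")
    case True then show ?thesis using H crit_node_all by (simp add: same_crit_class_def)
  next
    case False
    have cp: "critical_path n E [y, x]" using H
      by (simp add: crit_path_iff closed_path_def cp_weight_def numeral_2_eq_2 add.commute)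
    have e1: "(x, y) \<in> critical_edges n E"
      unfolding critical_edges_def using cp by (auto intro!: exI[of _ "[y,x]"] exI[of _ 1])
    have e2: "(y, x) \<in> critical_edges n E"
      unfolding critical_edges_def using cp by (auto intro!: exI[of _ "[y,x]"] exI[of _ 0])
    show ?thesis using e1 e2 H crit_node_all by (auto simp: same_crit_class_def)
  qed
qed

end

context ctx63
begin

abbreviation "kk \<equiv> length cs"

lemma cs_lt: "a < kk \<Longrightarrow> cs ! a < n"
  using reps crit_node_lt by (auto simp: crit_reps_def)

lemma cs_inj: "a < kk \<Longrightarrow> b < kk \<Longrightarrow> E (cs!a) (cs!b) + E (cs!b) (cs!a) = 0 \<Longrightarrow> a = b"
  using reps same_class_iff cs_lt by (auto simp: crit_reps_def)

lemma rep_ex: "i < n \<Longrightarrow> \<exists>a<kk. E i (cs!a) + E (cs!a) i = 0"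
proof -
  assume i: "i < n"
  obtain a where "a < kk" "same_crit_class n E i (cs!a)"
    using reps crit_node_all[OF i] unfolding crit_reps_def by blast
  then show ?thesis using same_class_iff by blast
qed

lemma kpos: "0 < kk" using rep_ex[OF npos] by auto

definition r :: "nat \<Rightarrow> nat" where "r i = (SOME a. a < kk \<and> E i (cs!a) + E (cs!a) i = 0)"

lemma r_prop: "i < n \<Longrightarrow> r i < kk \<and> E i (cs!(r i)) + E (cs!(r i)) i = 0"
  unfolding r_def by (rule someI_ex) (rule rep_ex)

lemma r_cs: "a < kk \<Longrightarrow> r (cs!a) = a"
  using r_prop[OF cs_lt] cs_inj by (metis add.commute)

definition sub :: "rmat \<Rightarrow> rmat" where
  "sub A = (\<lambda>i j. if i < kk \<and> j < kk then A (cs!i) (cs!j) else 0)"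

definition lift :: "rmat \<Rightarrow> rmat" where
  "lift G = (\<lambda>i j. if i < n \<and> j < n then E i (cs!(r i)) + G (r i) (r j) + E (cs!(r j)) j else 0)"

lemma sub_mats: "sub A \<in> mats kk" by (simp add: sub_def mats_def)
lemma lift_mats: "lift G \<in> mats n" by (simp add: lift_def mats_def)

lemma lift_mul: "tmul n (lift G) (lift U) = lift (tmul kk G U)"
proof (intro ext)
  fix i j
  show "tmul n (lift G) (lift U) i j = lift (tmul kk G U) i j"
  proof (cases "i < n \<and> j < n")
    case False then show ?thesis by (auto simp: tmul_rm lift_def)
  next
    case True
    then have i: "i < n" and j: "j < n" by auto
    have ri: "r i < kk" and rj: "r j < kk" using r_prop i j by auto
    obtain b where b: "b < kk" "tmul kk G U (r i) (r j) = G (r i) b + U b (r j)"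
      using tmul_ex[OF ri rj] by blast
    have cb: "cs!b < n" "r (cs!b) = b" "E (cs!b) (cs!b) = 0" using cs_lt[OF b(1)] r_cs[OF b(1)] diag by auto
    show ?thesis
    proof (rule tmul_eqI[OF i j])
      fix t assume t: "t < n"
      have rt: "r t < kk" and z: "E t (cs!(r t)) + E (cs!(r t)) t = 0" using r_prop[OF t] by auto
      have "G (r i) (r t) + U (r t) (r j) \<le> tmul kk G U (r i) (r j)" using tmul_ge[OF ri rt rj] .
      then show "lift G i t + lift U t j \<le> lift (tmul kk G U) i j"
        using i j t z by (simp add: lift_def)
    next
      show "cs!b < n" by (rule cb(1))
      show "lift G i (cs!b) + lift U (cs!b) j = lift (tmul kk G U) i j"
        using i j cb b by (simp add: lift_def)
    qed
  qed
qed


lemma lift_subE: "lift (sub E) = E"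
proof (intro ext)
  fix i j
  show "lift (sub E) i j = E i j"
  proof (cases "i < n \<and> j < n")
    case False then show ?thesis using Emats by (auto simp: lift_def mats_def)
  next
    case True
    then have i: "i < n" and j: "j < n" by auto
    have ri: "r i < kk" and rj: "r j < kk" and zi: "E i (cs!(r i)) + E (cs!(r i)) i = 0"
      and zj: "E j (cs!(r j)) + E (cs!(r j)) j = 0" using r_prop i j by auto
    have ci: "cs!(r i) < n" and cj: "cs!(r j) < n" using cs_lt ri rj by auto
    have "E i (cs!(r i)) + E (cs!(r i)) (cs!(r j)) \<le> E i (cs!(r j))" using tri i ci cj by blast
    moreover have "E i (cs!(r j)) + E (cs!(r j)) j \<le> E i j" using tri i cj j by blast
    moreover have "E (cs!(r i)) i + E i j \<le> E (cs!(r i)) j" using tri i ci j by blast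
    moreover have "E (cs!(r i)) j + E j (cs!(r j)) \<le> E (cs!(r i)) (cs!(r j))" using tri ci cj j by blast
    ultimately show ?thesis using i j ri rj zi zj by (simp add: lift_def sub_def)
  qed
qed

lemma sub_lift: "G \<in> mats kk \<Longrightarrow> sub (lift G) = G"
  by (intro ext) (auto simp: sub_def lift_def mats_def cs_lt r_cs diag)

definition EME :: "rmat \<Rightarrow> bool" where
  "EME A \<longleftrightarrow> A \<in> mats n \<and> tmul n E A = A \<and> tmul n A E = A"

lemma lift_sub: "EME A \<Longrightarrow> lift (sub A) = A"
proof (intro ext)
  fix i j assume A: "EME A"
  then have Am: "A \<in> mats n" and EA: "tmul n E A = A" and AE: "tmul n A E = A" by (auto simp: EME_def)
  show "lift (sub A) i j = A i j"
  proof (cases "i < n \<and> j < n")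
    case False then show ?thesis using Am by (auto simp: lift_def mats_def)
  next
    case True
    then have i: "i < n" and j: "j < n" by auto
    have ri: "r i < kk" and rj: "r j < kk" and zi: "E i (cs!(r i)) + E (cs!(r i)) i = 0"
      and zj: "E j (cs!(r j)) + E (cs!(r j)) j = 0" using r_prop i j by auto
    have ci: "cs!(r i) < n" and cj: "cs!(r j) < n" using cs_lt ri rj by auto
    have "E i (cs!(r i)) + A (cs!(r i)) (cs!(r j)) \<le> A i (cs!(r j))"
      using tmul_ge[OF i ci cj, of E A] EA by simp
    moreover have "A i (cs!(r j)) + E (cs!(r j)) j \<le> A i j" using tmul_ge[OF i cj j, of A E] AE by simp
    moreover have "E (cs!(r i)) i + A i j \<le> A (cs!(r i)) j" using tmul_ge[OF ci i j, of E A] EA by simp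
    moreover have "A (cs!(r i)) j + E j (cs!(r j)) \<le> A (cs!(r i)) (cs!(r j))"
      using tmul_ge[OF ci j cj, of A E] AE by simp
    ultimately show ?thesis using i j ri rj zi zj by (simp add: lift_def sub_def)
  qed
qed

lemma sub_mul: "EME A \<Longrightarrow> EME B \<Longrightarrow> sub (tmul n A B) = tmul kk (sub A) (sub B)"
proof -
  assume A: "EME A" and B: "EME B"
  have "tmul n A B = lift (tmul kk (sub A) (sub B))"
    using lift_mul lift_sub[OF A] lift_sub[OF B] by metis
  then show ?thesis using sub_lift tmul_mats by simp
qed

lemma EME_E: "EME E" using Emats EE by (simp add: EME_def)

end

lemma emul_sel1: "i < length cs \<Longrightarrow> cs!i < n \<Longrightarrow> emul n (selmat cs) (embed A) i t = ereal (A (cs!i) t)"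
  unfolding emul_def setimg
  by (rule Max_eqI) (auto simp: selmat_def embed_def)

lemma etrans_sel: "j < length cs \<Longrightarrow> etrans (selmat cs) t j = (if t = cs!j then 0 else -\<infinity>)"
  by (simp add: etrans_def selmat_def)

lemma emul_sel: "i < length cs \<Longrightarrow> j < length cs \<Longrightarrow> cs!i < n \<Longrightarrow> cs!j < n \<Longrightarrow>
   emul n (emul n (selmat cs) (embed A)) (etrans (selmat cs)) i j = ereal (A (cs!i) (cs!j))"
  unfolding emul_def[of n "emul n (selmat cs) (embed A)"] setimg
  by (rule Max_eqI) (auto simp: emul_sel1 etrans_sel)

lemma Max_setimg_ge: "t < m \<Longrightarrow> (f t::real) \<le> Max {f t | t. t < (m::nat)}"
  unfolding setimg by (rule Max_ge) auto

lemma Max_setimg_ex: "0 < (m::nat) \<Longrightarrow> \<exists>t<m. Max {f t | t. t < m} = (f t::real)"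
proof -
  assume m: "0 < m"
  have "Max (f ` {..<m}) \<in> f ` {..<m}" by (rule Max_in) (use m in auto)
  then show ?thesis unfolding setimg by auto
qed

context ctx63
begin

abbreviation "FF \<equiv> sub E"

lemma F_diag: "a < kk \<Longrightarrow> FF a a = 0" using diag cs_lt by (simp add: sub_def)

lemma F_off: "a < kk \<Longrightarrow> b < kk \<Longrightarrow> a \<noteq> b \<Longrightarrow> FF a b + FF b a < 0"
proof -
  assume a: "a < kk" and b: "b < kk" and ab: "a \<noteq> b"
  have "E (cs!a) (cs!b) + E (cs!b) (cs!a) \<le> 0" using sym_le cs_lt a b by blast
  moreover have "E (cs!a) (cs!b) + E (cs!b) (cs!a) \<noteq> 0" using cs_inj a b ab by blast
  ultimately show ?thesis using a b by (simp add: sub_def)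
qed

lemma col_in: "j < kk \<Longrightarrow> col FF j \<in> colspace kk FF"
proof -
  assume j: "j < kk"
  have e: "col FF j = (\<lambda>i. if i < kk then Max {(\<lambda>t. col FF j) t i + (\<lambda>t. 0) t | t. t < (1::nat)} else 0)"
    using sub_mats[of E] unfolding setimg by (auto simp: col_def mats_def fun_eq_iff lessThan_Suc)
  have v: "\<forall>t<(1::nat). (\<lambda>t. col FF j) t \<in> {col FF j | j. j < kk}" using j by blast
  show ?thesis unfolding colspace_def tspan_def
    using e v by (intro CollectI exI[of _ "1::nat"] exI[of _ "\<lambda>t. col FF j"] exI[of _ "\<lambda>t. 0::real"]) simp
qed

lemma extremal:
  assumes S: "S \<subseteq> colspace kk FF" "tspan kk S = colspace kk FF" and j: "j < kk"
  shows "\<exists>s\<in>S. \<exists>c. \<forall>i<kk. s i = FF i j - c"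
proof -
  have "col FF j \<in> colspace kk FF" by (rule col_in[OF j])
  then have "col FF j \<in> tspan kk S" using S by simp
  then obtain m :: nat and vs c where m: "0 < m" and vsS: "\<forall>t<m. vs t \<in> S"
    and eq: "col FF j = (\<lambda>i. if i < kk then Max {vs t i + c t | t. t < m} else 0)"
    unfolding tspan_def by (elim CollectE exE conjE) assumption
  have eqi: "\<And>i. i < kk \<Longrightarrow> FF i j = Max {vs t i + c t | t. t < m}"
    using eq by (simp add: fun_eq_iff col_def)
  have upper: "\<And>i t. i < kk \<Longrightarrow> t < m \<Longrightarrow> vs t i + c t \<le> FF i j"
    using eqi Max_setimg_ge by simp
  obtain t where t: "t < m" "Max {vs t j + c t | t. t < m} = vs t j + c t"
    using Max_setimg_ex[OF m, of "\<lambda>t. vs t j + c t"] by blast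
  have vtj: "vs t j + c t = 0" using t eqi[OF j] F_diag[OF j] by simp
  have "vs t \<in> colspace kk FF" using vsS t S by blast
  then obtain m' :: nat and ws d where m': "0 < m'" and wsS: "\<forall>u<m'. ws u \<in> {col FF l | l. l < kk}"
    and eq': "vs t = (\<lambda>i. if i < kk then Max {ws u i + d u | u. u < m'} else 0)"
    unfolding colspace_def tspan_def by (elim CollectE exE conjE) assumption
  have eqi': "\<And>i. i < kk \<Longrightarrow> vs t i = Max {ws u i + d u | u. u < m'}"
    using eq' by (simp add: fun_eq_iff)
  obtain u where u: "u < m'" "Max {ws u j + d u | u. u < m'} = ws u j + d u"
    using Max_setimg_ex[OF m', of "\<lambda>u. ws u j + d u"] by blast
  obtain l where l: "l < kk" "ws u = col FF l" using wsS u by blast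
  have lower: "FF i l + d u \<le> vs t i" if i: "i < kk" for i
    using eqi'[OF i] Max_setimg_ge[OF u(1), of "\<lambda>u. ws u i + d u"] l by (simp add: col_def)
  have vj: "vs t j = FF j l + d u" using eqi'[OF j] u l by (simp add: col_def)
  have a1: "d u + c t \<le> FF l j" using lower[OF l(1)] upper[OF l(1) t(1)] F_diag[OF l(1)] by simp
  have a2: "FF j l + d u + c t = 0" using vj vtj by simp
  have lj: "l = j"
  proof (rule ccontr)
    assume "l \<noteq> j"
    then have "FF j l + FF l j < 0" using F_off[OF j l(1)] by auto
    then show False using a1 a2 by linarith
  qed
  have du: "d u = - c t" using a2 lj F_diag[OF j] by simp
  have "\<forall>i<kk. vs t i = FF i j - c t"
  proof (intro allI impI)
    fix i assume i: "i < kk"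
    show "vs t i = FF i j - c t" using lower[OF i] upper[OF i t(1)] lj du by simp
  qed
  then show ?thesis using vsS t by blast
qed

lemma col_inj: "inj_on (col FF) {..<kk}"
proof (rule inj_onI)
  fix a b assume a: "a \<in> {..<kk}" and b: "b \<in> {..<kk}" and e: "col FF a = col FF b"
  have "FF a a = FF a b" "FF b a = FF b b" using fun_cong[OF e, of a] fun_cong[OF e, of b]
    by (simp_all add: col_def)
  then show "a = b"
  proof (rule_tac ccontr)
    assume "FF a a = FF a b" "FF b a = FF b b" "a \<noteq> b"
    then show False using F_off[of a b] F_diag[of a] F_diag[of b] a b by auto
  qed
qed

lemma rank: "trank kk FF = kk"
  unfolding trank_def
proof (rule Least_equality)
  let ?S = "col FF ` {..<kk}"
  have cs: "tspan kk ?S = colspace kk FF" unfolding colspace_def by (simp only: setimg)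
  have sub: "?S \<subseteq> colspace kk FF" using col_in by blast
  have cd: "card ?S = kk" using col_inj by (simp add: card_image)
  have fin: "finite ?S" by simp
  show "\<exists>S. finite S \<and> S \<subseteq> colspace kk FF \<and> tspan kk S = colspace kk FF \<and> card S = kk"
    using fin sub cs cd by blast
next
  fix y assume "\<exists>S. finite S \<and> S \<subseteq> colspace kk FF \<and> tspan kk S = colspace kk FF \<and> card S = y"
  then obtain S where S: "finite S" "S \<subseteq> colspace kk FF" "tspan kk S = colspace kk FF" "card S = y"
    by blast
  define f where "f j = (SOME s. s \<in> S \<and> (\<exists>c. \<forall>i<kk. s i = FF i j - c))" for j
  have fp: "f j \<in> S \<and> (\<exists>c. \<forall>i<kk. f j i = FF i j - c)" if j: "j < kk" for j
  proof -
    have "\<exists>s. s \<in> S \<and> (\<exists>c. \<forall>i<kk. s i = FF i j - c)" using extremal[OF S(2) S(3) j] by blast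
    then show ?thesis unfolding f_def by (rule someI_ex)
  qed
  have inj: "inj_on f {..<kk}"
  proof (rule inj_onI)
    fix a b assume a: "a \<in> {..<kk}" and b: "b \<in> {..<kk}" and e: "f a = f b"
    obtain c1 where c1: "\<forall>i<kk. f a i = FF i a - c1" using fp a by blast
    obtain c2 where c2: "\<forall>i<kk. f b i = FF i b - c2" using fp b by blast
    have "FF a a - c1 = FF a b - c2" "FF b a - c1 = FF b b - c2" using c1 c2 e a b by auto
    then show "a = b"
    proof (rule_tac ccontr)
      assume "FF a a - c1 = FF a b - c2" "FF b a - c1 = FF b b - c2" "a \<noteq> b"
      then show False using F_off[of a b] F_diag[of a] F_diag[of b] a b by auto
    qed
  qed
  have im: "f ` {..<kk} \<subseteq> S" using fp by blast
  have "card {..<kk} \<le> card S" using card_inj_on_le[OF inj im S(1)] .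
  then show "kk \<le> y" using S(4) by simp
qed

end

context ctx63
begin

lemma F_idem: "idempotent kk FF"
  using sub_mats sub_mul[OF EME_E EME_E] EE by (simp add: idempotent_def)

lemma H_EME: "A \<in> Hclass n E \<Longrightarrow> EME A"
proof -
  assume "A \<in> Hclass n E"
  then obtain x x' where Am: "A \<in> mats n" and x: "A = tmul n E x" and x': "A = tmul n x' E"
    using Hclass_char[OF idem] by blast
  have "tmul n E A = A" using x EE tmul_assoc by metis
  moreover have "tmul n A E = A" using x' EE tmul_assoc by metis
  ultimately show ?thesis using Am by (simp add: EME_def)
qed

lemma sub_H: "A \<in> Hclass n E \<Longrightarrow> sub A \<in> Hclass kk FF"
proof -
  assume H: "A \<in> Hclass n E"
  have A: "EME A" by (rule H_EME[OF H])
  then have EA: "tmul n E A = A" and AE: "tmul n A E = A" by (auto simp: EME_def)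
  obtain y y' where y: "E = tmul n A y" and y': "E = tmul n y' A"
    using Hclass_char[OF idem] H by blast
  define Y where "Y = tmul n (tmul n E y) E"
  define Y' where "Y' = tmul n (tmul n E y') E"
  have EY: "EME Y" unfolding EME_def Y_def using tmul_mats EE tmul_assoc by metis
  have EY': "EME Y'" unfolding EME_def Y'_def using tmul_mats EE tmul_assoc by metis
  have AY: "tmul n A Y = E" unfolding Y_def using AE y EE tmul_assoc by metis
  have YA: "tmul n Y' A = E" unfolding Y'_def using EA y' EE tmul_assoc by metis
  have 1: "sub A = tmul kk FF (sub A)" using sub_mul[OF EME_E A] EA by simp
  have 2: "FF = tmul kk (sub A) (sub Y)" using sub_mul[OF A EY] AY by simp
  have 3: "sub A = tmul kk (sub A) FF" using sub_mul[OF A EME_E] AE by simp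
  have 4: "FF = tmul kk (sub Y') (sub A)" using sub_mul[OF EY' A] YA by simp
  show ?thesis unfolding Hclass_char[OF F_idem] using 1 2 3 4 sub_mats by blast
qed

lemma lift_H: "G \<in> Hclass kk FF \<Longrightarrow> lift G \<in> Hclass n E"
proof -
  assume H: "G \<in> Hclass kk FF"
  then obtain x y x' y' where x: "G = tmul kk FF x" and y: "FF = tmul kk G y"
    and x': "G = tmul kk x' FF" and y': "FF = tmul kk y' G"
    using Hclass_char[OF F_idem] by blast
  have 1: "lift G = tmul n E (lift x)" using x lift_mul lift_subE by metis
  have 2: "E = tmul n (lift G) (lift y)" using y lift_mul lift_subE by metis
  have 3: "lift G = tmul n (lift x') E" using x' lift_mul lift_subE by metis
  have 4: "E = tmul n (lift y') (lift G)" using y' lift_mul lift_subE by metis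
  show ?thesis unfolding Hclass_char[OF idem] using 1 2 3 4 lift_mats by blast
qed

lemma H_mats: "G \<in> Hclass m e \<Longrightarrow> G \<in> mats m" by (simp add: Hclass_def)

lemma bij: "bij_betw sub (Hclass n E) (Hclass kk FF)"
  unfolding bij_betw_def
proof
  show "inj_on sub (Hclass n E)"
    by (rule inj_onI) (metis lift_sub H_EME)
  show "sub ` Hclass n E = Hclass kk FF"
  proof
    show "sub ` Hclass n E \<subseteq> Hclass kk FF" using sub_H by blast
    show "Hclass kk FF \<subseteq> sub ` Hclass n E"
    proof
      fix G assume G: "G \<in> Hclass kk FF"
      then have "G = sub (lift G)" using sub_lift H_mats by metis
      then show "G \<in> sub ` Hclass n E" using lift_H[OF G] by blast
    qed
  qed
qed

lemma phi_eq: "phi n cs = sub"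
proof (intro ext)
  fix A i j
  show "phi n cs A i j = sub A i j"
    using emul_sel[of i cs j n A] cs_lt by (simp add: phi_def sub_def)
qed

end

theorem theorem6p3:
  fixes n :: nat and E :: rmat and cs :: "nat list"
  assumes "0 < n"
    and "idempotent n E"
    and "\<forall>i < n. E i i = 0"
    and "crit_reps n E cs"
  defines "k \<equiv> length cs"
    and "F \<equiv> phi n cs E"
  shows "(\<forall>A \<in> mats n. \<forall>i < k. \<forall>j < k.
            emul n (emul n (selmat cs) (embed A)) (etrans (selmat cs)) i j = ereal (A (cs ! i) (cs ! j)))
     \<and> F \<in> mats k \<and> idempotent k F \<and> trank k F = k
     \<and> bij_betw (phi n cs) (Hclass n E) (Hclass k F)
     \<and> (\<forall>A \<in> Hclass n E. \<forall>B \<in> Hclass n E. phi n cs (tmul n A B) = tmul k (phi n cs A) (phi n cs B))"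
proof -
  interpret c: ctx63 n E cs using assms(1-4) by unfold_locales
  have F: "F = c.sub E" unfolding F_def c.phi_eq ..
  show ?thesis unfolding F k_def c.phi_eq
    using emul_sel c.cs_lt c.sub_mats c.F_idem c.rank c.bij c.sub_mul c.H_EME by auto
qed

end
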